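(* Let $r\ge 1$ be an integer and let $G$ be an $r$-regular finite simple graph of order $n$. Then $$\gamma_{st}(G)=2\,\gamma_{\times\lceil (r+1)/2\rceil,t}(G)-n,$$ and, if moreover $r\ge 2$, $$\alpha^{2}_{st}(G)=n-2\,\gamma_{\times\lfloor r/2\rfloor,t}(G).$$
   Context: For a vertex $v$ of a graph $G=(V,E)$, $N(v)$ is its open neighborhood, and for $f:V\to\mathbb{R}$ and $B\subseteq V$ write $f(B)=\sum_{v\in B}f(v)$; $f(V)$ is the weight of $f$. A signed total dominating function is a function $f:V\to\{-1,1\}$ with $f(N(v))\ge 1$ for all $v\in V$; $\gamma_{st}(G)$ is the minimum weight of such a function. A signed total $2$-independence function is a function $f:V\to\{-1,1\}$ with $f(N(v))\le 1$ for all $v\in V$; $\alpha^{2}_{st}(G)$ is the maximum weight of such a function. For an integer $1\le k\le \delta(G)$, a $k$-tuple total dominating set of $G$ is a set $D\subseteq V$ with $|N(v)\cap D|\ge k$ for all $v\in V$; $\gamma_{\times k,t}(G)$ is the minimum cardinality of a $k$-tuple total dominating set. *)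

theory Defs
  imports Main
begin

definition simple_graph :: "'a set \<Rightarrow> ('a \<Rightarrow> 'a \<Rightarrow> bool) \<Rightarrow> bool" where
  "simple_graph V E \<longleftrightarrow> finite V \<and> (\<forall>u v. E u v \<longrightarrow> u \<in> V \<and> v \<in> V)
     \<and> (\<forall>u v. E u v \<longrightarrow> E v u) \<and> (\<forall>v. \<not> E v v)"

definition nbhd :: "'a set \<Rightarrow> ('a \<Rightarrow> 'a \<Rightarrow> bool) \<Rightarrow> 'a \<Rightarrow> 'a set" where
  "nbhd V E v = {u \<in> V. E v u}"

definition regular :: "'a set \<Rightarrow> ('a \<Rightarrow> 'a \<Rightarrow> bool) \<Rightarrow> nat \<Rightarrow> bool" where
  "regular V E r \<longleftrightarrow> (\<forall>v\<in>V. card (nbhd V E v) = r)"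

text \<open>Functions V -> {-1,1}; values outside V are normalised to 0 so the set of such functions is finite.\<close>
definition sign_funs :: "'a set \<Rightarrow> ('a \<Rightarrow> int) set" where
  "sign_funs V = {f. (\<forall>v\<in>V. f v = 1 \<or> f v = -1) \<and> (\<forall>v. v \<notin> V \<longrightarrow> f v = 0)}"

definition weight :: "'a set \<Rightarrow> ('a \<Rightarrow> int) \<Rightarrow> int" where
  "weight V f = (\<Sum>v\<in>V. f v)"

definition is_STDF :: "'a set \<Rightarrow> ('a \<Rightarrow> 'a \<Rightarrow> bool) \<Rightarrow> ('a \<Rightarrow> int) \<Rightarrow> bool" where
  "is_STDF V E f \<longleftrightarrow> f \<in> sign_funs V \<and> (\<forall>v\<in>V. (\<Sum>u\<in>nbhd V E v. f u) \<ge> 1)"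

definition gamma_st :: "'a set \<Rightarrow> ('a \<Rightarrow> 'a \<Rightarrow> bool) \<Rightarrow> int" where
  "gamma_st V E = Min (weight V ` {f. is_STDF V E f})"

definition is_ST2IF :: "'a set \<Rightarrow> ('a \<Rightarrow> 'a \<Rightarrow> bool) \<Rightarrow> ('a \<Rightarrow> int) \<Rightarrow> bool" where
  "is_ST2IF V E f \<longleftrightarrow> f \<in> sign_funs V \<and> (\<forall>v\<in>V. (\<Sum>u\<in>nbhd V E v. f u) \<le> 1)"

definition alpha2_st :: "'a set \<Rightarrow> ('a \<Rightarrow> 'a \<Rightarrow> bool) \<Rightarrow> int" where
  "alpha2_st V E = Max (weight V ` {f. is_ST2IF V E f})"

definition is_ktuple_tds :: "'a set \<Rightarrow> ('a \<Rightarrow> 'a \<Rightarrow> bool) \<Rightarrow> nat \<Rightarrow> 'a set \<Rightarrow> bool" where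
  "is_ktuple_tds V E k D \<longleftrightarrow> D \<subseteq> V \<and> (\<forall>v\<in>V. card (nbhd V E v \<inter> D) \<ge> k)"

definition gamma_ktuple_t :: "'a set \<Rightarrow> ('a \<Rightarrow> 'a \<Rightarrow> bool) \<Rightarrow> nat \<Rightarrow> nat" where
  "gamma_ktuple_t V E k = Min (card ` {D. is_ktuple_tds V E k D})"

end

theory Submission
  imports Defs
begin

lemma minmax_aff:
  fixes C :: "nat set" and m :: int
  assumes "finite C" "C \<noteq> {}"
  shows "Min ((\<lambda>c. 2*int c - m) ` C) = 2*int(Min C) - m"
    and "Max ((\<lambda>c. m - 2*int c) ` C) = m - 2*int (Min C)"
proof -
  have mi: "Min C \<in> C" using assms by simp
  have ml: "\<And>c. c \<in> C \<Longrightarrow> Min C \<le> c" using assms by simp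
  show "Min ((\<lambda>c. 2*int c - m) ` C) = 2*int(Min C) - m"
    by (rule Min_eqI) (use assms mi ml in auto)
  show "Max ((\<lambda>c. m - 2*int c) ` C) = m - 2*int (Min C)"
    by (rule Max_eqI) (use assms mi ml in auto)
qed

definition posset :: "'a set \<Rightarrow> ('a \<Rightarrow> int) \<Rightarrow> 'a set" where
  "posset V f = {v\<in>V. f v = 1}"

definition ind :: "'a set \<Rightarrow> 'a set \<Rightarrow> 'a \<Rightarrow> int" where
  "ind V D v = (if v \<in> D then 1 else if v \<in> V then -1 else 0)"

lemma sum_sign:
  assumes "f \<in> sign_funs V" "A \<subseteq> V" "finite V"
  shows "(\<Sum>u\<in>A. f u) = 2 * int (card (A \<inter> posset V f)) - int (card A)"
proof -
  let ?D = "posset V f"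
  have fA: "finite A" using assms finite_subset by blast
  have "(\<Sum>u\<in>A. f u) = (\<Sum>u\<in>A \<inter> ?D. f u) + (\<Sum>u\<in>A - ?D. f u)"
    using fA by (metis Diff_disjoint Int_Diff_Un Int_Diff_disjoint finite_Diff finite_Int sum.union_disjoint)
  also have "(\<Sum>u\<in>A \<inter> ?D. f u) = (\<Sum>u\<in>A \<inter> ?D. 1)"
    by (rule sum.cong) (auto simp: posset_def)
  also have "(\<Sum>u\<in>A - ?D. f u) = (\<Sum>u\<in>A - ?D. -1)"
    using assms by (intro sum.cong) (auto simp: posset_def sign_funs_def)
  also have "card (A - ?D) = card A - card (A \<inter> ?D)"
    using fA by (metis card_Diff_subset_Int finite_Int Diff_Int2 Int_absorb Int_commute card_Diff_subset inf_le2 Diff_Int_distrib2 Int_Diff)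
  moreover have "card (A \<inter> ?D) \<le> card A" using fA by (simp add: card_mono)
  ultimately show ?thesis by (simp add: of_nat_diff)
qed

lemma ind_sign: "D \<subseteq> V \<Longrightarrow> ind V D \<in> sign_funs V"
  by (auto simp: ind_def sign_funs_def)

lemma posset_ind: "D \<subseteq> V \<Longrightarrow> posset V (ind V D) = D"
  by (auto simp: ind_def posset_def)

lemma posset_sub: "posset V f \<subseteq> V" by (auto simp: posset_def)

lemma nbhd_sub: "nbhd V E v \<subseteq> V" by (auto simp: nbhd_def)

theorem mainTheorem6:
  fixes V :: "'a set" and E :: "'a \<Rightarrow> 'a \<Rightarrow> bool" and r n :: nat
  assumes "simple_graph V E" and "regular V E r" and "r \<ge> 1" and "card V = n"
  shows "gamma_st V E = 2 * int (gamma_ktuple_t V E ((r + 2) div 2)) - int n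
         \<and> (r \<ge> 2 \<longrightarrow> alpha2_st V E = int n - 2 * int (gamma_ktuple_t V E (r div 2)))"
proof -
  have fV: "finite V" using assms(1) by (simp add: simple_graph_def)
  have cn: "\<And>v. v \<in> V \<Longrightarrow> card (nbhd V E v) = r" using assms(2) by (simp add: regular_def)
  have wt: "\<And>f. f \<in> sign_funs V \<Longrightarrow> weight V f = 2 * int (card (posset V f)) - int n"
  proof -
    fix f assume "f \<in> sign_funs V"
    thus "weight V f = 2 * int (card (posset V f)) - int n"
      using sum_sign[OF _ order_refl fV, of f] assms(4) posset_sub[of V f]
      by (simp add: weight_def Int_absorb1)
  qed
  have nb: "\<And>f v. f \<in> sign_funs V \<Longrightarrow> v \<in> V \<Longrightarrow>
      (\<Sum>u\<in>nbhd V E v. f u) = 2 * int (card (nbhd V E v \<inter> posset V f)) - int r"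
    using sum_sign[OF _ nbhd_sub fV] cn by simp
  have fin: "\<And>k. finite (card ` {D. is_ktuple_tds V E k D})"
    using fV by (auto simp: is_ktuple_tds_def intro: finite_subset[of _ "Pow V"])
  have ne: "\<And>k. k \<le> r \<Longrightarrow> card ` {D. is_ktuple_tds V E k D} \<noteq> {}"
  proof -
    fix k assume "k \<le> r"
    hence "is_ktuple_tds V E k V" using cn by (simp add: is_ktuple_tds_def nbhd_def Int_absorb2)
    thus "card ` {D. is_ktuple_tds V E k D} \<noteq> {}" by blast
  qed
  let ?k1 = "(r + 2) div 2"
  have img1: "weight V ` {f. is_STDF V E f} = (\<lambda>c. 2*int c - int n) ` (card ` {D. is_ktuple_tds V E ?k1 D})"
  proof (rule set_eqI, rule iffI)
    fix w assume "w \<in> weight V ` {f. is_STDF V E f}"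
    then obtain f where f: "is_STDF V E f" "w = weight V f" by blast
    have s: "f \<in> sign_funs V" using f by (simp add: is_STDF_def)
    have "is_ktuple_tds V E ?k1 (posset V f)"
      unfolding is_ktuple_tds_def
    proof (intro conjI ballI posset_sub)
      fix v assume v: "v \<in> V"
      have "1 \<le> (\<Sum>u\<in>nbhd V E v. f u)" using f v by (simp add: is_STDF_def)
      thus "?k1 \<le> card (nbhd V E v \<inter> posset V f)" using nb[OF s v] by linarith
    qed
    thus "w \<in> (\<lambda>c. 2*int c - int n) ` (card ` {D. is_ktuple_tds V E ?k1 D})"
      using f wt[OF s] by blast
  next
    fix w assume "w \<in> (\<lambda>c. 2*int c - int n) ` (card ` {D. is_ktuple_tds V E ?k1 D})"
    then obtain D where D: "is_ktuple_tds V E ?k1 D" "w = 2*int (card D) - int n" by blast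
    have DV: "D \<subseteq> V" using D by (simp add: is_ktuple_tds_def)
    have s: "ind V D \<in> sign_funs V" using ind_sign[OF DV] .
    have "is_STDF V E (ind V D)"
      unfolding is_STDF_def
    proof (intro conjI ballI s)
      fix v assume v: "v \<in> V"
      have "?k1 \<le> card (nbhd V E v \<inter> D)" using D v by (simp add: is_ktuple_tds_def)
      thus "1 \<le> (\<Sum>u\<in>nbhd V E v. ind V D u)" using nb[OF s v] posset_ind[OF DV] by simp
    qed
    moreover have "w = weight V (ind V D)" using wt[OF s] posset_ind[OF DV] D by simp
    ultimately show "w \<in> weight V ` {f. is_STDF V E f}" by blast
  qed
  have p1: "gamma_st V E = 2 * int (gamma_ktuple_t V E ?k1) - int n"
    unfolding gamma_st_def gamma_ktuple_t_def img1
    by (rule minmax_aff(1)[OF fin ne]) (use assms(3) in simp)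
  have p2: "alpha2_st V E = int n - 2 * int (gamma_ktuple_t V E (r div 2))" if r2: "r \<ge> 2"
  proof -
    let ?k = "r div 2"
    have img: "weight V ` {f. is_ST2IF V E f} = (\<lambda>c. int n - 2*int c) ` (card ` {D. is_ktuple_tds V E ?k D})"
    proof (rule set_eqI, rule iffI)
      fix w assume "w \<in> weight V ` {f. is_ST2IF V E f}"
      then obtain f where f: "is_ST2IF V E f" "w = weight V f" by blast
      have s: "f \<in> sign_funs V" using f by (simp add: is_ST2IF_def)
      let ?D = "V - posset V f"
      have cD: "card ?D = n - card (posset V f)" "card (posset V f) \<le> n"
        using fV assms(4) posset_sub[of V f] by (auto simp: card_Diff_subset card_mono finite_subset)
      have "is_ktuple_tds V E ?k ?D"
        unfolding is_ktuple_tds_def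
      proof (intro conjI ballI)
        show "?D \<subseteq> V" by blast
        fix v assume v: "v \<in> V"
        have "(\<Sum>u\<in>nbhd V E v. f u) \<le> 1" using f v by (simp add: is_ST2IF_def)
        hence a: "2 * int (card (nbhd V E v \<inter> posset V f)) \<le> int r + 1" using nb[OF s v] by linarith
        have "nbhd V E v \<inter> ?D = nbhd V E v - (nbhd V E v \<inter> posset V f)" using nbhd_sub[of V E v] by blast
        hence "card (nbhd V E v \<inter> ?D) = r - card (nbhd V E v \<inter> posset V f)"
          using cn[OF v] fV nbhd_sub[of V E v] by (simp add: card_Diff_subset finite_subset)
        moreover have "card (nbhd V E v \<inter> posset V f) \<le> r"
          using cn[OF v] fV nbhd_sub[of V E v] by (metis card_mono finite_subset inf_le1)
        ultimately show "?k \<le> card (nbhd V E v \<inter> ?D)" using a by linarith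
      qed
      moreover have "w = int n - 2 * int (card ?D)" using f wt[OF s] cD by simp
      ultimately show "w \<in> (\<lambda>c. int n - 2*int c) ` (card ` {D. is_ktuple_tds V E ?k D})" by blast
    next
      fix w assume "w \<in> (\<lambda>c. int n - 2*int c) ` (card ` {D. is_ktuple_tds V E ?k D})"
      then obtain D where D: "is_ktuple_tds V E ?k D" "w = int n - 2*int (card D)" by blast
      have DV: "D \<subseteq> V" using D by (simp add: is_ktuple_tds_def)
      let ?P = "V - D"
      have PV: "?P \<subseteq> V" by blast
      have s: "ind V ?P \<in> sign_funs V" using ind_sign[OF PV] .
      have ps: "posset V (ind V ?P) = ?P" using posset_ind[OF PV] .
      have "is_ST2IF V E (ind V ?P)"
        unfolding is_ST2IF_def
      proof (intro conjI ballI s)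
        fix v assume v: "v \<in> V"
        have a: "?k \<le> card (nbhd V E v \<inter> D)" using D v by (simp add: is_ktuple_tds_def)
        have "nbhd V E v \<inter> ?P = nbhd V E v - (nbhd V E v \<inter> D)" using nbhd_sub[of V E v] by blast
        hence "card (nbhd V E v \<inter> ?P) = r - card (nbhd V E v \<inter> D)"
          using cn[OF v] fV nbhd_sub[of V E v] by (simp add: card_Diff_subset finite_subset)
        moreover have "card (nbhd V E v \<inter> D) \<le> r"
          using cn[OF v] fV nbhd_sub[of V E v] by (metis card_mono finite_subset inf_le1)
        ultimately show "(\<Sum>u\<in>nbhd V E v. ind V ?P u) \<le> 1" using nb[OF s v] ps a by simp
      qed
      moreover have "card ?P = n - card D" "card D \<le> n"
        using fV assms(4) DV by (auto simp: card_Diff_subset card_mono finite_subset)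
      hence "w = weight V (ind V ?P)" using wt[OF s] ps D by simp
      ultimately show "w \<in> weight V ` {f. is_ST2IF V E f}" by blast
    qed
    show ?thesis
      unfolding alpha2_st_def gamma_ktuple_t_def img
      by (rule minmax_aff(2)[OF fin ne]) simp
  qed
  show ?thesis using p1 p2 by blast
qed

end
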